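(* Let $N\in\mathbb N$, $\lambda_1,\dots,\lambda_N>0$, $\xi_1,\dots,\xi_N\in H^{1/2}(\mathbb R^3)$ (not necessarily distinct), and $m>0$, and suppose the functions $u^{\lambda_1}_{\xi_1,m},\dots,u^{\lambda_N}_{\xi_N,m}$ are nonzero and mutually orthogonal in $L^2(\mathbb R^3\times\mathbb R^3)$. If $m'>0$ satisfies $\frac{|m-m'|}{m'(m+1)}<1$, then $u^{\lambda_1}_{\xi_1,m'},\dots,u^{\lambda_N}_{\xi_N,m'}$ are linearly independent, i.e. they span an $N$-dimensional space.
   Context: For a mass $m>0$ put $\mu_m=\frac{2}{m+1}$. For $\lambda>0$ and $\xi\in H^{1/2}(\mathbb R^3)$, $u^\lambda_{\xi,m}\in L^2(\mathbb R^3\times\mathbb R^3)$ is defined via Fourier transform ($\widehat\phi(p)=(2\pi)^{-d/2}\int e^{-\mathrm ipx}\phi(x)dx$) by $\widehat{u^\lambda_{\xi,m}}(p_1,p_2)=\frac{\widehat\xi(p_1)-\widehat\xi(p_2)}{p_1^2+p_2^2+\mu_m\,p_1\cdot p_2+\lambda}$. *)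

theory Defs
  imports "HOL-Analysis.Analysis"
begin

text \<open>Everything is expressed on the Fourier side. A function xi in H^(1/2)(R^3) is
represented by its Fourier transform xih : R^3 -> C; u^lambda_{xi,m} is represented
by its Fourier transform on R^3 x R^3. By Plancherel, L2 inner products, L2 nullity
and linear (in)dependence are unchanged by the unitary Fourier transform.\<close>

definition mu :: "real \<Rightarrow> real" where
  "mu m = 2 / (m + 1)"

definition H_half_hat :: "(real^3 \<Rightarrow> complex) \<Rightarrow> bool" where
  "H_half_hat xih \<longleftrightarrow> xih \<in> borel_measurable lborel \<and>
     integrable lborel (\<lambda>p. (1 + (norm p)\<^sup>2) powr (1/2) * (cmod (xih p))\<^sup>2)"

definition u_hat :: "real \<Rightarrow> (real^3 \<Rightarrow> complex) \<Rightarrow> real \<Rightarrow> ((real^3) \<times> (real^3)) \<Rightarrow> complex" where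
  "u_hat lam xih m = (\<lambda>(p1, p2). (xih p1 - xih p2) /
      complex_of_real ((p1 \<bullet> p1) + (p2 \<bullet> p2) + mu m * (p1 \<bullet> p2) + lam))"

definition L2_inner :: "((real^3) \<times> (real^3) \<Rightarrow> complex) \<Rightarrow> ((real^3) \<times> (real^3) \<Rightarrow> complex) \<Rightarrow> complex" where
  "L2_inner f g = (\<integral>x. f x * cnj (g x) \<partial>lborel)"

definition L2_nonzero :: "((real^3) \<times> (real^3) \<Rightarrow> complex) \<Rightarrow> bool" where
  "L2_nonzero f \<longleftrightarrow> \<not> (AE x in lborel. f x = 0)"

definition L2_lin_indep :: "nat \<Rightarrow> (nat \<Rightarrow> (real^3) \<times> (real^3) \<Rightarrow> complex) \<Rightarrow> bool" where
  "L2_lin_indep N f \<longleftrightarrow>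
     (\<forall>c :: nat \<Rightarrow> complex. (AE x in lborel. (\<Sum>i<N. c i * f i x) = 0) \<longrightarrow> (\<forall>i<N. c i = 0))"

end

theory Submission
  imports Defs
begin

lemma prod_lin_degree:
  fixes T :: "complex set"
  assumes "finite T"
  shows "degree (\<Prod>y\<in>T. [:-y, 1:]) = card T" "lead_coeff (\<Prod>y\<in>T. [:-y, 1:]) = 1"
proof -
  show "degree (\<Prod>y\<in>T. [:-y, 1:]) = card T"
    by (subst degree_prod_eq_sum_degree) (auto simp: assms)
  show "lead_coeff (\<Prod>y\<in>T. [:-y, 1:]) = 1"
    by (simp add: lead_coeff_prod)
qed

lemma lagrange_sum_zero:
  fixes S :: "complex set" and P :: "complex poly"
  assumes fin: "finite S" and deg: "degree P + 2 \<le> card S"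
  shows "(\<Sum>x\<in>S. poly P x / (\<Prod>y\<in>S-{x}. (x - y))) = 0"
proof -
  define n where "n = card S - 1"
  have cS: "card S = Suc n" using deg unfolding n_def by simp
  define L where "L = (\<Sum>x\<in>S. smult (poly P x / (\<Prod>y\<in>S-{x}. (x - y))) (\<Prod>y\<in>S-{x}. [:-y, 1:]))"
  have cardx: "card (S - {x}) = n" if "x \<in> S" for x using that cS fin by simp
  have degL: "degree L \<le> n"
    unfolding L_def
    proof (rule degree_sum_le[OF fin])
      fix x assume x: "x \<in> S"
      show "degree (smult (poly P x / (\<Prod>y\<in>S-{x}. (x - y))) (\<Prod>y\<in>S-{x}. [:-y, 1:])) \<le> n"
        by (rule order_trans[OF degree_smult_le]) (simp add: prod_lin_degree fin cardx x n_def)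
    qed
  have polyL: "poly L z = poly P z" if z: "z \<in> S" for z
  proof -
    have "poly L z = (\<Sum>x\<in>S. poly P x / (\<Prod>y\<in>S-{x}. (x - y)) * (\<Prod>y\<in>S-{x}. (z - y)))"
      unfolding L_def by (simp add: poly_sum poly_prod)
    also have "\<dots> = (\<Sum>x\<in>{z}. poly P x / (\<Prod>y\<in>S-{x}. (x - y)) * (\<Prod>y\<in>S-{x}. (z - y)))"
    proof (rule sum.mono_neutral_right)
      show "\<forall>i\<in>S - {z}. poly P i / (\<Prod>y\<in>S - {i}. i - y) * (\<Prod>y\<in>S - {i}. z - y) = 0"
      proof
        fix i assume "i \<in> S - {z}"
        then have "(\<Prod>y\<in>S - {i}. z - y) = 0" using fin z by (auto intro!: prod_zero)
        then show "poly P i / (\<Prod>y\<in>S - {i}. i - y) * (\<Prod>y\<in>S - {i}. z - y) = 0" by simp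
      qed
    qed (use fin z in auto)
    also have "\<dots> = poly P z"
    proof -
      have "(\<Prod>y\<in>S-{z}. (z - y)) \<noteq> 0" using fin by auto
      then show ?thesis by simp
    qed
    finally show ?thesis .
  qed
  have "L - P = 0"
  proof (rule ccontr)
    assume ne: "L - P \<noteq> 0"
    have "S \<subseteq> {x. poly (L - P) x = 0}" using polyL by auto
    then have "card S \<le> card {x. poly (L - P) x = 0}"
      using poly_roots_finite[OF ne] by (intro card_mono) auto
    also have "\<dots> \<le> degree (L - P)" by (rule card_poly_roots_bound[OF ne])
    also have "\<dots> \<le> n" using degL deg cS by (intro degree_diff_le) auto
    finally show False using cS by simp
  qed
  then have LP: "L = P" by simp
  have "coeff L n = (\<Sum>x\<in>S. poly P x / (\<Prod>y\<in>S-{x}. (x - y)) * coeff (\<Prod>y\<in>S-{x}. [:-y, 1:]) n)"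
    unfolding L_def by (simp add: coeff_sum)
  also have "\<dots> = (\<Sum>x\<in>S. poly P x / (\<Prod>y\<in>S-{x}. (x - y)))"
  proof (rule sum.cong[OF refl])
    fix x assume "x \<in> S"
    then have "coeff (\<Prod>y\<in>S-{x}. [:-y, 1:]) n = 1"
      using prod_lin_degree[of "S - {x}"] cardx fin by auto
    then show "poly P x / (\<Prod>y\<in>S-{x}. (x - y)) * coeff (\<Prod>y\<in>S-{x}. [:-y, 1:]) n = poly P x / (\<Prod>y\<in>S-{x}. (x - y))" by simp
  qed
  finally have "(\<Sum>x\<in>S. poly P x / (\<Prod>y\<in>S-{x}. (x - y))) = coeff P n" using LP by simp
  also have "coeff P n = 0" using deg cS by (intro coeff_eq_0) auto
  finally show ?thesis .
qed

lemma ae_zero_cont: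
  fixes f :: "'a::euclidean_space \<Rightarrow> complex"
  assumes ae: "AE p in lborel. f p = 0" and c: "isCont f p0"
  shows "f p0 = 0"
proof (rule ccontr)
  assume ne: "f p0 \<noteq> 0"
  obtain e where e: "e > 0" "\<And>y. dist p0 y < e \<Longrightarrow> f y \<noteq> 0"
    using continuous_at_avoid[OF c ne] by blast
  have "AE p in lborel. p \<notin> ball p0 e"
    using ae by eventually_elim (use e in \<open>auto simp: dist_commute\<close>)
  then have "emeasure lborel (ball p0 e) = 0"
    by (subst AE_iff_measurable[symmetric, where P = "\<lambda>p. p \<notin> ball p0 e"]) auto
  moreover have "measure lborel (ball p0 e) > 0" by (rule content_ball_pos[OF e(1)])
  ultimately show False by (simp add: measure_def)
qed

lemma hyperplane_AE:
  fixes a :: "'a::euclidean_space"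
  assumes "a \<noteq> 0"
  shows "AE p in lborel. a \<bullet> p \<noteq> b"
proof -
  have "negligible {x. a \<bullet> x = b}" using negligible_hyperplane assms by blast
  then have "{x. a \<bullet> x = b} \<in> null_sets lebesgue" by (simp add: negligible_iff_null_sets)
  moreover have "{x. a \<bullet> x = b} \<in> sets lborel" by measurable
  ultimately have "{x. a \<bullet> x = b} \<in> null_sets lborel"
    using null_sets_completion_iff by blast
  then show ?thesis
    by (rule AE_I'[where N = "{x. a \<bullet> x = b}"]) auto
qed

definition Pv :: "real set \<Rightarrow> (real \<Rightarrow> complex) \<Rightarrow> complex poly" where
  "Pv L v = (\<Sum>l\<in>L. smult (v l) (\<Prod>k\<in>L-{l}. [:complex_of_real k, 1:]))"

lemma Pv_degree:
  assumes "finite L"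
  shows "degree (Pv L v) \<le> card L - 1"
  unfolding Pv_def
proof (rule degree_sum_le[OF assms])
  fix l assume l: "l \<in> L"
  have "degree (\<Prod>k\<in>L-{l}. [:complex_of_real k, 1:]) = card (L - {l})"
    by (subst degree_prod_eq_sum_degree) auto
  also have "\<dots> = card L - 1" using l assms by simp
  finally show "degree (smult (v l) (\<Prod>k\<in>L-{l}. [:complex_of_real k, 1:])) \<le> card L - 1"
    by (metis degree_smult_le)
qed

lemma Pv_poly:
  assumes fin: "finite L" and nz: "\<And>k. k \<in> L \<Longrightarrow> x + complex_of_real k \<noteq> 0"
  shows "poly (Pv L v) x = (\<Prod>k\<in>L. x + complex_of_real k) * (\<Sum>l\<in>L. v l / (x + complex_of_real l))"
proof -
  have "poly (Pv L v) x = (\<Sum>l\<in>L. v l * (\<Prod>k\<in>L-{l}. x + complex_of_real k))"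
    unfolding Pv_def by (simp add: poly_sum poly_prod add.commute)
  also have "\<dots> = (\<Sum>l\<in>L. (\<Prod>k\<in>L. x + complex_of_real k) * (v l / (x + complex_of_real l)))"
  proof (rule sum.cong[OF refl])
    fix l assume l: "l \<in> L"
    have "(\<Prod>k\<in>L. x + complex_of_real k) = (x + complex_of_real l) * (\<Prod>k\<in>L-{l}. x + complex_of_real k)"
      using l fin by (simp add: prod.remove)
    then show "v l * (\<Prod>k\<in>L-{l}. x + complex_of_real k) = (\<Prod>k\<in>L. x + complex_of_real k) * (v l / (x + complex_of_real l))"
      using nz[OF l] by (simp add: field_simps)
  qed
  also have "\<dots> = (\<Prod>k\<in>L. x + complex_of_real k) * (\<Sum>l\<in>L. v l / (x + complex_of_real l))"
    by (simp add: sum_distrib_left)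
  finally show ?thesis .
qed

lemma Pv_root:
  assumes fin: "finite L" and l: "l \<in> L"
  shows "poly (Pv L v) (- complex_of_real l) = v l * (\<Prod>k\<in>L-{l}. complex_of_real k - complex_of_real l)"
proof -
  have "poly (Pv L v) (- complex_of_real l) = (\<Sum>j\<in>L. v j * (\<Prod>k\<in>L-{j}. complex_of_real k - complex_of_real l))"
    unfolding Pv_def by (simp add: poly_sum poly_prod)
  also have "\<dots> = (\<Sum>j\<in>{l}. v j * (\<Prod>k\<in>L-{j}. complex_of_real k - complex_of_real l))"
  proof (rule sum.mono_neutral_right)
    show "\<forall>i\<in>L - {l}. v i * (\<Prod>k\<in>L - {i}. complex_of_real k - complex_of_real l) = 0"
    proof
      fix i assume i: "i \<in> L - {l}"
      have "(\<Prod>k\<in>L - {i}. complex_of_real k - complex_of_real l) = 0"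
        using i l fin by (intro prod_zero) auto
      then show "v i * (\<Prod>k\<in>L - {i}. complex_of_real k - complex_of_real l) = 0" by simp
    qed
  qed (use fin l in auto)
  finally show ?thesis by simp
qed

lemma Pv_inj:
  assumes fin: "finite L" and eq: "Pv L v = Pv L w" and l: "l \<in> L"
  shows "v l = w l"
proof -
  have "v l * (\<Prod>k\<in>L-{l}. complex_of_real k - complex_of_real l) = w l * (\<Prod>k\<in>L-{l}. complex_of_real k - complex_of_real l)"
    using Pv_root[OF fin l, of v] Pv_root[OF fin l, of w] eq by metis
  moreover have "(\<Prod>k\<in>L-{l}. complex_of_real k - complex_of_real l) \<noteq> 0"
    using fin by (auto simp: prod_zero_iff)
  ultimately show ?thesis by simp
qed

definition Xf :: "real \<Rightarrow> real^3 \<Rightarrow> real^3 \<Rightarrow> real" where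
  "Xf \<mu> a p = a \<bullet> a + p \<bullet> p + \<mu> * (a \<bullet> p)"

lemma Xf_sym: "Xf \<mu> a p = Xf \<mu> p a"
  unfolding Xf_def by (simp add: inner_commute)

lemma Xf_lower:
  assumes "0 \<le> \<mu>" "\<mu> \<le> 2"
  shows "(1 - \<mu>/2) * (a \<bullet> a + p \<bullet> p) \<le> Xf \<mu> a p"
proof -
  have "0 \<le> (a + p) \<bullet> (a + p)" by simp
  then have h: "0 \<le> a \<bullet> a + p \<bullet> p + 2 * (a \<bullet> p)"
    by (simp add: inner_add_left inner_add_right inner_commute)
  have "Xf \<mu> a p - (1 - \<mu>/2) * (a \<bullet> a + p \<bullet> p) = (\<mu>/2) * (a \<bullet> a + p \<bullet> p + 2 * (a \<bullet> p))"
    unfolding Xf_def by (simp add: algebra_simps)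
  also have "\<dots> \<ge> 0" using h assms by simp
  finally show ?thesis by simp
qed

lemma Xf_nonneg:
  assumes "0 \<le> \<mu>" "\<mu> \<le> 2"
  shows "0 \<le> Xf \<mu> a p"
proof -
  have "0 \<le> (1 - \<mu>/2) * (a \<bullet> a + p \<bullet> p)" using assms by (simp add: add_nonneg_nonneg)
  then show ?thesis using Xf_lower[OF assms, of a p] by linarith
qed

lemma lagrange_idx:
  fixes J :: "'b set" and x :: "'b \<Rightarrow> complex" and P :: "complex poly"
  assumes fin: "finite J" and inj: "inj_on x J" and deg: "degree P + 2 \<le> card J"
  shows "(\<Sum>j\<in>J. poly P (x j) / (\<Prod>i\<in>J-{j}. (x j - x i))) = 0"
proof -
  have "(\<Sum>z\<in>x`J. poly P z / (\<Prod>y\<in>x`J-{z}. (z - y))) = (\<Sum>j\<in>J. poly P (x j) / (\<Prod>y\<in>x`J-{x j}. (x j - y)))"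
    by (rule sum.reindex[OF inj, unfolded comp_def])
  also have "\<dots> = (\<Sum>j\<in>J. poly P (x j) / (\<Prod>i\<in>J-{j}. (x j - x i)))"
  proof (rule sum.cong[OF refl])
    fix j assume j: "j \<in> J"
    have e: "x`J-{x j} = x`(J-{j})" using inj j by (auto simp: inj_on_def)
    have "(\<Prod>y\<in>x`(J-{j}). (x j - y)) = (\<Prod>i\<in>J-{j}. (x j - x i))"
      by (rule prod.reindex[unfolded comp_def]) (use inj in \<open>auto simp: inj_on_def\<close>)
    then show "poly P (x j) / (\<Prod>y\<in>x`J-{x j}. (x j - y)) = poly P (x j) / (\<Prod>i\<in>J-{j}. (x j - x i))"
      by (simp add: e)
  qed
  finally have eq: "(\<Sum>j\<in>J. poly P (x j) / (\<Prod>i\<in>J-{j}. (x j - x i))) = (\<Sum>z\<in>x`J. poly P z / (\<Prod>y\<in>x`J-{z}. (z - y)))" ..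
  have "card (x ` J) = card J" using card_image[OF inj] .
  then show ?thesis unfolding eq by (intro lagrange_sum_zero) (use fin deg in auto)
qed

lemma hyperplane_null:
  fixes a :: "'a::euclidean_space"
  assumes "a \<noteq> 0"
  shows "{x. a \<bullet> x = b} \<in> null_sets lborel"
proof -
  have "negligible {x. a \<bullet> x = b}" using negligible_hyperplane assms by blast
  then have "{x. a \<bullet> x = b} \<in> null_sets lebesgue" by (simp add: negligible_iff_null_sets)
  moreover have "{x. a \<bullet> x = b} \<in> sets lborel" by measurable
  ultimately show ?thesis using null_sets_completion_iff by blast
qed

lemma infinite_inner_image:
  fixes u :: "real^3"
  assumes u: "u \<noteq> 0" and N: "N \<in> null_sets lborel"
  shows "infinite ((\<lambda>q. u \<bullet> q) ` (UNIV - N))"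
proof
  assume fin: "finite ((\<lambda>q. u \<bullet> q) ` (UNIV - N))"
  let ?U = "(\<lambda>q. u \<bullet> q) ` (UNIV - N)"
  have "(\<Union>s\<in>?U. {x. u \<bullet> x = s}) \<in> null_sets lborel"
    using fin by (intro null_sets_UN' countable_finite hyperplane_null u) auto
  then have "N \<union> (\<Union>s\<in>?U. {x. u \<bullet> x = s}) \<in> null_sets lborel" using N by auto
  moreover have "N \<union> (\<Union>s\<in>?U. {x. u \<bullet> x = s}) = UNIV" by auto
  ultimately have "(UNIV :: (real^3) set) \<in> null_sets lborel" by simp
  then have "emeasure lborel (UNIV :: (real^3) set) = 0" by auto
  then show False by simp
qed

lemma lin_roots_finite:
  fixes c s :: real
  assumes "s \<noteq> 0"
  shows "finite {t. c + t * s = 0}"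
proof -
  have "{t. c + t * s = 0} \<subseteq> {- c / s}" using assms by (auto simp: field_simps)
  then show ?thesis by (rule finite_subset) simp
qed

lemma core_pair:
  fixes \<mu> :: real and L :: "real set" and W :: "real^3 \<Rightarrow> real \<Rightarrow> complex"
    and N :: "(real^3) set" and q1 q2 :: "real^3"
  assumes mu: "0 < \<mu>" "\<mu> < 2" and fin: "finite L" and Lne: "L \<noteq> {}" and Lpos: "\<And>l. l \<in> L \<Longrightarrow> l > 0"
    and N: "N \<in> null_sets lborel"
    and good: "\<And>a. a \<notin> N \<Longrightarrow> AE p in lborel.
         (\<Sum>l\<in>L. (W a l - W p l) / complex_of_real (Xf \<mu> a p + l)) = 0"
    and q: "q1 \<notin> N" "q2 \<notin> N" "q1 \<noteq> q2"
  shows "\<forall>l\<in>L. W q1 l = W q2 l"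
proof -
  define K where "K = card L"
  have Xdiff: "Xf \<mu> a p - Xf \<mu> b p = a \<bullet> a - b \<bullet> b + \<mu> * ((a - b) \<bullet> p)" for a b p
    unfolding Xf_def by (simp add: inner_diff_left algebra_simps)
  have K1: "K \<ge> 1" using fin Lne unfolding K_def by (simp add: Suc_leI card_gt_0_iff)
  define d where "d = q1 - q2"
  have d0: "d \<noteq> 0" using q unfolding d_def by simp
  obtain u :: "real^3" where u0: "u \<noteq> 0" and ud: "orthogonal d u"
    using orthogonal_to_vector_exists[of d] by auto
  have ud': "u \<bullet> d = 0" using ud by (simp add: orthogonal_def inner_commute)
  have uq12: "u \<bullet> q2 = u \<bullet> q1" using ud' unfolding d_def by (simp add: inner_diff_right)
  have "infinite ((\<lambda>q. u \<bullet> q) ` (UNIV - N) - {u \<bullet> q1})"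
    using infinite_inner_image[OF u0 N] by simp
  then obtain V where V: "finite V" "card V = K - 1" "V \<subseteq> (\<lambda>q. u \<bullet> q) ` (UNIV - N) - {u \<bullet> q1}"
    using infinite_arbitrarily_large by blast
  define g where "g s = (SOME q. q \<notin> N \<and> u \<bullet> q = s)" for s
  have g: "g s \<notin> N \<and> u \<bullet> g s = s" if "s \<in> V" for s
  proof -
    from that V(3) obtain q where "q \<notin> N" "u \<bullet> q = s" by auto
    then show ?thesis unfolding g_def by (metis (mono_tags, lifting) someI_ex)
  qed
  define Q3 where "Q3 = g ` V"
  have injg: "inj_on g V" by (rule inj_onI) (metis g)
  have Q3fin: "finite Q3" using V(1) unfolding Q3_def by simp
  have cQ3: "card Q3 = K - 1" unfolding Q3_def using card_image[OF injg] V(2) by simp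
  have Q3N: "q \<notin> N" if "q \<in> Q3" for q using that g unfolding Q3_def by auto
  have Q3u: "u \<bullet> q \<noteq> u \<bullet> q1" if "q \<in> Q3" for q using that g V(3) unfolding Q3_def by auto
  have Q3inj: "u \<bullet> a \<noteq> u \<bullet> b" if "a \<in> Q3" "b \<in> Q3" "a \<noteq> b" for a b
    using that g unfolding Q3_def by auto
  have q1Q3: "q1 \<notin> Q3" using Q3u by auto
  have q2Q3: "q2 \<notin> Q3" using Q3u uq12 by auto
  define A where "A = insert q1 Q3"
  define J where "J = insert q2 A"
  have Afin: "finite A" "finite J" using Q3fin unfolding A_def J_def by auto
  have q2A: "q2 \<notin> A" using q q2Q3 unfolding A_def by auto
  have cJ: "card J = K + 1" unfolding J_def A_def using q q1Q3 q2Q3 Q3fin cQ3 K1 by simp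
  have Ainj: "u \<bullet> a \<noteq> u \<bullet> b" if "a \<in> A" "b \<in> A" "a \<noteq> b" for a b
    using that Q3inj Q3u unfolding A_def by (metis insert_iff)
  have JN: "j \<notin> N" if "j \<in> J" for j using that q Q3N unfolding J_def A_def by auto
  define xc where "xc j p = complex_of_real (Xf \<mu> j p)" for j p
  define R where "R j = Pv L (W j) - Pv L (W q2)" for j
  define \<Phi> where "\<Phi> p = poly (R q1) (xc q1 p) / (\<Prod>i\<in>Q3. xc q1 p - xc i p)
     + (\<Sum>j\<in>Q3. (xc q1 p - xc q2 p) * poly (R j) (xc j p) / (\<Prod>i\<in>J-{j}. xc j p - xc i p))" for p
  have AE\<Phi>: "AE p in lborel. \<Phi> p = 0"
  proof -
    have AE1: "AE p in lborel. \<forall>j\<in>J. (\<Sum>l\<in>L. (W j l - W p l) / complex_of_real (Xf \<mu> j p + l)) = 0"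
      by (rule AE_finite_allI[OF Afin(2)]) (rule good[OF JN])
    have AE2: "AE p in lborel. \<forall>i\<in>J. \<forall>j\<in>J. i \<noteq> j \<longrightarrow> Xf \<mu> i p \<noteq> Xf \<mu> j p"
    proof (rule AE_finite_allI[OF Afin(2)], rule AE_finite_allI[OF Afin(2)])
      fix i j assume "i \<in> J" "j \<in> J"
      show "AE p in lborel. i \<noteq> j \<longrightarrow> Xf \<mu> i p \<noteq> Xf \<mu> j p"
      proof (cases "i = j")
        case False
        then have ne: "\<mu> *\<^sub>R (i - j) \<noteq> 0" using mu by simp
        show ?thesis using hyperplane_AE[OF ne, of "j \<bullet> j - i \<bullet> i"]
        proof eventually_elim
          case (elim p)
          show ?case
          proof
            assume "i \<noteq> j"
            show "Xf \<mu> i p \<noteq> Xf \<mu> j p"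
            proof
              assume "Xf \<mu> i p = Xf \<mu> j p"
              then have "Xf \<mu> i p - Xf \<mu> j p = 0" by simp
              then have "i \<bullet> i - j \<bullet> j + \<mu> * ((i - j) \<bullet> p) = 0" using Xdiff[where a=i and b=j and p=p] by simp
              then have "(\<mu> *\<^sub>R (i - j)) \<bullet> p = j \<bullet> j - i \<bullet> i" by (simp add: inner_scaleR_left algebra_simps)
              then show False using elim by simp
            qed
          qed
        qed
      qed simp
    qed
    show ?thesis using AE1 AE2
    proof eventually_elim
      case (elim p)
      have injx: "inj_on (\<lambda>j. xc j p) J"
        using elim(2) unfolding xc_def by (auto simp: inj_on_def)
      have nz: "xc j p + complex_of_real l \<noteq> 0" if "l \<in> L" for j l
      proof -
        have "0 \<le> Xf \<mu> j p" using Xf_nonneg mu by simp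
        then have "Xf \<mu> j p + l > 0" using Lpos[OF that] by simp
        then show ?thesis unfolding xc_def by (metis of_real_add of_real_eq_0_iff less_irrefl)
      qed
      have Pveq: "poly (Pv L (W p)) (xc j p) = poly (Pv L (W j)) (xc j p)" if j: "j \<in> J" for j
      proof -
        have "(\<Sum>l\<in>L. (W j l - W p l) / (xc j p + complex_of_real l)) = 0"
          using elim(1) j unfolding xc_def by simp
        then have "(\<Sum>l\<in>L. W j l / (xc j p + complex_of_real l)) - (\<Sum>l\<in>L. W p l / (xc j p + complex_of_real l)) = 0"
          by (simp add: sum_subtractf diff_divide_distrib)
        then have "(\<Sum>l\<in>L. W p l / (xc j p + complex_of_real l)) = (\<Sum>l\<in>L. W j l / (xc j p + complex_of_real l))"
          by simp
        then show ?thesis using Pv_poly[OF fin nz] by simp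
      qed
      define D where "D j = (\<Prod>i\<in>J-{j}. xc j p - xc i p)" for j
      have degPv: "degree (Pv L v) + 2 \<le> card J" for v
        using Pv_degree[OF fin, of v] cJ K1 unfolding K_def by simp
      have L1: "(\<Sum>j\<in>J. poly (Pv L (W p)) (xc j p) / D j) = 0"
        unfolding D_def by (rule lagrange_idx[OF Afin(2) injx degPv])
      have L2: "(\<Sum>j\<in>J. poly (Pv L (W q2)) (xc j p) / D j) = 0"
        unfolding D_def by (rule lagrange_idx[OF Afin(2) injx degPv])
      have S0: "(\<Sum>j\<in>J. poly (R j) (xc j p) / D j) = 0"
      proof -
        have "(\<Sum>j\<in>J. poly (R j) (xc j p) / D j) =
            (\<Sum>j\<in>J. poly (Pv L (W p)) (xc j p) / D j - poly (Pv L (W q2)) (xc j p) / D j)"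
          by (rule sum.cong[OF refl]) (simp add: R_def Pveq diff_divide_distrib)
        also have "\<dots> = 0" using L1 L2 by (simp add: sum_subtractf)
        finally show ?thesis .
      qed
      have Rq2: "R q2 = 0" unfolding R_def by simp
      have Jsplit: "(\<Sum>j\<in>J. poly (R j) (xc j p) / D j) = poly (R q1) (xc q1 p) / D q1 + (\<Sum>j\<in>Q3. poly (R j) (xc j p) / D j)"
        unfolding J_def A_def using q2A Q3fin q1Q3 Rq2 by (simp add: A_def)
      have q12J: "q1 \<in> J" "q2 \<in> J" unfolding J_def A_def by auto
      have x12ne: "xc q1 p - xc q2 p \<noteq> 0" using injx q12J q(3) by (auto simp: inj_on_def)
      have Dq1: "D q1 = (xc q1 p - xc q2 p) * (\<Prod>i\<in>Q3. xc q1 p - xc i p)"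
      proof -
        have "J - {q1} = insert q2 Q3" unfolding J_def A_def using q(3) q1Q3 by auto
        then show ?thesis unfolding D_def using Q3fin q2Q3 by simp
      qed
      have e1: "(xc q1 p - xc q2 p) * (poly (R q1) (xc q1 p) / D q1) = poly (R q1) (xc q1 p) / (\<Prod>i\<in>Q3. xc q1 p - xc i p)"
        unfolding Dq1 using x12ne
        by (cases "(\<Prod>i\<in>Q3. xc q1 p - xc i p) = 0") (simp_all add: field_simps)
      have e2: "(xc q1 p - xc q2 p) * (\<Sum>j\<in>Q3. poly (R j) (xc j p) / D j) =
          (\<Sum>j\<in>Q3. (xc q1 p - xc q2 p) * poly (R j) (xc j p) / (\<Prod>i\<in>J-{j}. xc j p - xc i p))"
        unfolding D_def by (simp add: sum_distrib_left times_divide_eq_right)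
      have "\<Phi> p = (xc q1 p - xc q2 p) * (\<Sum>j\<in>J. poly (R j) (xc j p) / D j)"
        unfolding Jsplit distrib_left e1 e2 \<Phi>_def ..

      then show ?case using S0 by simp
    qed
  qed
  define \<alpha> where "\<alpha> = (q2 \<bullet> q2 - q1 \<bullet> q1) / (\<mu> * (d \<bullet> d))"
  define pt where "pt t = \<alpha> *\<^sub>R d + t *\<^sub>R u" for t
  have dd: "d \<bullet> d \<noteq> 0" using d0 by simp
  have dpt: "d \<bullet> pt t = \<alpha> * (d \<bullet> d)" for t
    unfolding pt_def using ud' by (simp add: inner_add_right inner_commute)
  have x12: "xc q1 (pt t) = xc q2 (pt t)" for t
  proof -
    have "\<mu> * (\<alpha> * (d \<bullet> d)) = q2 \<bullet> q2 - q1 \<bullet> q1" unfolding \<alpha>_def using mu dd by (simp add: field_simps)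
    then have "Xf \<mu> q1 (pt t) - Xf \<mu> q2 (pt t) = 0"
      using Xdiff[where a=q1 and b=q2 and p="pt t"] dpt[of t] unfolding d_def by simp
    then show ?thesis unfolding xc_def by simp
  qed
  define Tb where "Tb = (\<Union>ab\<in>{(a,b). a \<in> A \<and> b \<in> A \<and> a \<noteq> b}. {t. Xf \<mu> (fst ab) (pt t) = Xf \<mu> (snd ab) (pt t)})"
  have Tbfin: "finite Tb"
    unfolding Tb_def
  proof (rule finite_UN_I)
    show "finite {(a, b). a \<in> A \<and> b \<in> A \<and> a \<noteq> b}"
      by (rule finite_subset[of _ "A \<times> A"]) (use Afin in auto)
  next
    fix ab assume "ab \<in> {(a, b). a \<in> A \<and> b \<in> A \<and> a \<noteq> b}"
    then obtain a b where ab: "ab = (a, b)" "a \<in> A" "b \<in> A" "a \<noteq> b" by auto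
    have s0: "\<mu> * (u \<bullet> a - u \<bullet> b) \<noteq> 0" using Ainj[OF ab(2-4)] mu by simp
    have "{t. Xf \<mu> a (pt t) = Xf \<mu> b (pt t)} \<subseteq>
        {t. (a \<bullet> a - b \<bullet> b + \<mu> * \<alpha> * ((a - b) \<bullet> d)) + t * (\<mu> * (u \<bullet> a - u \<bullet> b)) = 0}"
    proof
      fix t assume "t \<in> {t. Xf \<mu> a (pt t) = Xf \<mu> b (pt t)}"
      then have "Xf \<mu> a (pt t) - Xf \<mu> b (pt t) = 0" by simp
      then have "a \<bullet> a - b \<bullet> b + \<mu> * ((a - b) \<bullet> pt t) = 0" using Xdiff[where a=a and b=b and p="pt t"] by simp
      moreover have "(a - b) \<bullet> pt t = \<alpha> * ((a - b) \<bullet> d) + t * (u \<bullet> a - u \<bullet> b)"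
        unfolding pt_def by (simp add: inner_add_right inner_diff_left inner_diff_right inner_commute)
      ultimately have "(a \<bullet> a - b \<bullet> b + \<mu> * \<alpha> * ((a - b) \<bullet> d)) + t * (\<mu> * (u \<bullet> a - u \<bullet> b)) = 0"
        by (metis (no_types, lifting) add.assoc distrib_left mult.assoc mult.left_commute)
      then show "t \<in> {t. (a \<bullet> a - b \<bullet> b + \<mu> * \<alpha> * ((a - b) \<bullet> d)) + t * (\<mu> * (u \<bullet> a - u \<bullet> b)) = 0}"
        by simp
    qed
    then show "finite {t. Xf \<mu> (fst ab) (pt t) = Xf \<mu> (snd ab) (pt t)}"
      using lin_roots_finite[OF s0] ab(1) finite_subset by auto
  qed
  have root: "poly (R q1) (xc q1 (pt t)) = 0" if t: "t \<notin> Tb" for t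
  proof -
    define p0 where "p0 = pt t"
    have dist: "xc a p0 \<noteq> xc b p0" if "a \<in> A" "b \<in> A" "a \<noteq> b" for a b
      using t that unfolding Tb_def xc_def p0_def by auto
    have x12': "xc q1 p0 = xc q2 p0" using x12 unfolding p0_def .
    have q1A: "q1 \<in> A" unfolding A_def by simp
    have P3: "(\<Prod>i\<in>Q3. xc q1 p0 - xc i p0) \<noteq> 0"
      using Q3fin dist[OF q1A] q1Q3 by (auto simp: A_def)
    have PJ: "(\<Prod>i\<in>J-{j}. xc j p0 - xc i p0) \<noteq> 0" if j: "j \<in> Q3" for j
    proof -
      have "xc j p0 \<noteq> xc i p0" if i: "i \<in> J - {j}" for i
      proof (cases "i = q2")
        case True
        then show ?thesis using dist[OF _ q1A, of j] j q1Q3 x12' by (auto simp: A_def)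
      next
        case False
        then have "i \<in> A" using i unfolding J_def by auto
        then show ?thesis using dist[of j i] j i by (auto simp: A_def)
      qed
      then show ?thesis using Afin by auto
    qed
    have cont: "isCont \<Phi> p0"
      unfolding \<Phi>_def xc_def Xf_def
      using P3 PJ unfolding xc_def Xf_def
      by (intro continuous_intros) auto
    have "\<Phi> p0 = 0" by (rule ae_zero_cont[OF AE\<Phi> cont])
    moreover have "\<Phi> p0 = poly (R q1) (xc q1 p0) / (\<Prod>i\<in>Q3. xc q1 p0 - xc i p0)"
      unfolding \<Phi>_def using x12' by simp
    ultimately show ?thesis using P3 unfolding p0_def by simp
  qed
  define Qd where "Qd = [:complex_of_real (q1 \<bullet> q1 + (\<alpha> *\<^sub>R d) \<bullet> (\<alpha> *\<^sub>R d) + \<mu> * (q1 \<bullet> (\<alpha> *\<^sub>R d))),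
      complex_of_real (\<mu> * (q1 \<bullet> u)), complex_of_real (u \<bullet> u):]"
  have Qd: "poly Qd (complex_of_real t) = xc q1 (pt t)" for t
  proof -
    have "Xf \<mu> q1 (pt t) = (q1 \<bullet> q1 + (\<alpha> *\<^sub>R d) \<bullet> (\<alpha> *\<^sub>R d) + \<mu> * (q1 \<bullet> (\<alpha> *\<^sub>R d)))
        + t * ((\<mu> * (q1 \<bullet> u)) + t * (u \<bullet> u))"
      unfolding Xf_def pt_def using ud' by (simp add: inner_add_right inner_add_left inner_commute algebra_simps)
    then show ?thesis unfolding Qd_def xc_def by simp
  qed
  have degQd: "degree Qd > 0" using u0 unfolding Qd_def by simp
  have "pcompose (R q1) Qd = 0"
  proof (rule ccontr)
    assume ne: "pcompose (R q1) Qd \<noteq> 0"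
    have "complex_of_real ` (UNIV - Tb) \<subseteq> {x. poly (pcompose (R q1) Qd) x = 0}"
      using root Qd by (auto simp: poly_pcompose)
    moreover have "infinite (complex_of_real ` (UNIV - Tb))"
      using Tbfin by (subst finite_image_iff) (auto simp: inj_on_def infinite_UNIV_char_0 Diff_infinite_finite)
    ultimately show False using poly_roots_finite[OF ne] finite_subset by blast
  qed
  then have "R q1 = 0" using pcompose_eq_0[OF _ degQd] by blast
  then have "Pv L (W q1) = Pv L (W q2)" unfolding R_def by simp
  then show ?thesis using Pv_inj[OF fin] by blast
qed

lemma aux_le3: "(x::real) \<le> i \<Longrightarrow> 0 \<le> a \<Longrightarrow> 0 \<le> b \<Longrightarrow> x \<le> i + a + b" by linarith

lemma h_bound:
  fixes t :: real
  shows "(1 + t\<^sup>2) powr (-2/3) \<le> indicator {-1..1} t + indicator {1..} t * t powr (-4/3)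
            + indicator {1..} (-t) * (-t) powr (-4/3)"
proof (cases "\<bar>t\<bar> \<le> 1")
  case True
  have "(1 + t\<^sup>2) powr (-2/3) \<le> 1 powr (-2/3)" by (rule powr_mono2') auto
  then have "(1 + t\<^sup>2) powr (-2/3) \<le> 1" by simp
  moreover have "indicator {-1..1} t = (1::real)" using True by (auto simp: indicator_def)
  moreover have "0 \<le> indicator {1..} t * t powr (-4/3)" "0 \<le> indicator {1..} (-t) * (-t) powr (-4/3)"
    by (auto simp: indicator_def)
  ultimately show ?thesis by (intro aux_le3) auto
next
  case False
  define s where "s = \<bar>t\<bar>"
  have s1: "s > 1" using False unfolding s_def by simp
  have "(1 + t\<^sup>2) powr (-2/3) \<le> (s\<^sup>2) powr (-2/3)"
    by (rule powr_mono2') (use s1 in \<open>auto simp: s_def\<close>)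
  also have "(s\<^sup>2) powr (-2/3) = s powr (-4/3)"
  proof -
    have "s\<^sup>2 = s powr 2" using s1 by (simp add: powr_numeral)
    then have "(s\<^sup>2) powr (-2/3) = s powr (2 * (-2/3))" by (simp only: powr_powr)
    then show ?thesis by simp
  qed
  finally have b: "(1 + t\<^sup>2) powr (-2/3) \<le> s powr (-4/3)" .
  show ?thesis
  proof (cases "t \<ge> 0")
    case True
    then have "t \<ge> 1" "s = t" using s1 unfolding s_def by auto
    then show ?thesis using b by (auto simp: indicator_def)
  next
    case False
    then have "-t \<ge> 1" "s = -t" using s1 unfolding s_def by auto
    then show ?thesis using b by (auto simp: indicator_def)
  qed
qed

definition f1 :: "real \<Rightarrow> real" where "f1 t = indicator {-1..1} t"
lemma f1m[measurable]: "f1 \<in> borel_measurable borel" unfolding f1_def by measurable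
definition f2 :: "real \<Rightarrow> real" where "f2 t = indicator {1..} t * t powr (-4/3)"
lemma f2m[measurable]: "f2 \<in> borel_measurable borel" unfolding f2_def by measurable
lemma f2_c1: "ennreal (f2 t) = ennreal (t powr (-4/3)) * indicator {1..} t"
  unfolding f2_def by (cases "t \<ge> 1") (simp_all add: indicator_def)
lemma f2_c2: "(\<integral>\<^sup>+t. ennreal (f1 t) + (ennreal (f2 t) + ennreal (f2 (-t))) \<partial>lborel) = 
 (\<integral>\<^sup>+t. ennreal (f1 t) \<partial>lborel) + ((\<integral>\<^sup>+t. ennreal (f2 t) \<partial>lborel) + (\<integral>\<^sup>+t. ennreal (f2 (-t)) \<partial>lborel))"
  apply (subst nn_integral_add)
    apply measurable
  apply (subst nn_integral_add)
    apply measurable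
  done
lemma f2_c3: "0 \<le> f2 t" unfolding f2_def by (simp add: indicator_def)
lemma f2_c4: "(x::real) \<le> a + (b + c) \<Longrightarrow> 0 \<le> a \<Longrightarrow> 0 \<le> b \<Longrightarrow> 0 \<le> c \<Longrightarrow> ennreal x \<le> ennreal a + (ennreal b + ennreal c)"
  by (metis add_nonneg_nonneg ennreal_leI ennreal_plus)
lemma f2_I3: "(\<integral>\<^sup>+t. ennreal (f2 (-t)) \<partial>lborel) = (\<integral>\<^sup>+t. ennreal (f2 t) \<partial>lborel)"
    using nn_integral_real_affine[of "\<lambda>t. ennreal (f2 t)" "-1" 0] by simp
lemma f2_hi: "((\<lambda>x. x powr (-4/3)) has_integral -((1::real) powr (-4/3+1)) / (-4/3+1)) {1..}"
      by (rule has_integral_powr_to_inf) auto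
lemma f2_I2: "(\<integral>\<^sup>+t. ennreal (f2 t) \<partial>lborel) < \<infinity>"
proof -
  have "(\<integral>\<^sup>+x. ennreal (x powr (-4/3)) * indicator {1..} x \<partial>lborel) = ennreal (-((1::real) powr (-4/3+1)) / (-4/3+1))"
      by (rule nn_integral_has_integral_lebesgue'[OF _ f2_hi]) auto
  then show ?thesis unfolding f2_c1 by simp
qed
lemma f2_I1: "(\<integral>\<^sup>+t. ennreal (f1 t) \<partial>lborel) < \<infinity>"
proof -
  have e: "(\<lambda>t. ennreal (f1 t)) = indicator {-1..1::real}"
    by (auto simp: f1_def indicator_def fun_eq_iff)
  have "(\<integral>\<^sup>+t. ennreal (f1 t) \<partial>lborel) = emeasure lborel {-1..1::real}"
    unfolding e by (rule nn_integral_indicator) simp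
  also have "\<dots> = ennreal 2" by simp
  finally show ?thesis by simp
qed

lemma h_nn_finite: "(\<integral>\<^sup>+t. ennreal ((1 + t\<^sup>2) powr (-2/3)) \<partial>lborel) < \<infinity>"
proof -
  have "(\<integral>\<^sup>+t. ennreal ((1 + t\<^sup>2) powr (-2/3)) \<partial>lborel) \<le>
      (\<integral>\<^sup>+t. ennreal (f1 t) + (ennreal (f2 t) + ennreal (f2 (-t))) \<partial>lborel)"
  proof (rule nn_integral_mono)
    fix t :: real
    have "(1 + t\<^sup>2) powr (-2/3) \<le> f1 t + (f2 t + f2 (-t))"
      using h_bound[of t] unfolding f2_def f1_def by (simp only: add.assoc)
    then show "ennreal ((1 + t\<^sup>2) powr (-2/3)) \<le> ennreal (f1 t) + (ennreal (f2 t) + ennreal (f2 (-t)))"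
      by (rule f2_c4) (simp_all add: f2_c3 f1_def)
  qed
  also have "\<dots> < \<infinity>" unfolding f2_c2 using f2_I1 f2_I2 f2_I3 by (simp add: ennreal_add_less_top)
  finally show ?thesis .
qed

lemma G3_pointwise:
  fixes q :: "real^3"
  shows "1 / (1 + q \<bullet> q)\<^sup>2 \<le> (\<Prod>b\<in>Basis. (1 + (q \<bullet> b)\<^sup>2) powr (-2/3))"
proof -
  define y where "y = 1 + q \<bullet> q"
  have y1: "y \<ge> 1" unfolding y_def by simp
  have each: "0 \<le> y powr (-2/3) \<and> y powr (-2/3) \<le> (1 + (q \<bullet> b)\<^sup>2) powr (-2/3)" if b: "b \<in> Basis" for b
  proof
    show "0 \<le> y powr (-2/3)" by simp
    have "\<bar>q \<bullet> b\<bar> \<le> norm q" by (rule Basis_le_norm[OF b])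
    then have "(q \<bullet> b)\<^sup>2 \<le> (norm q)\<^sup>2"
      by (metis abs_ge_zero power2_abs power_mono)
    then have "1 + (q \<bullet> b)\<^sup>2 \<le> y" unfolding y_def by (simp add: power2_norm_eq_inner)
    then show "y powr (-2/3) \<le> (1 + (q \<bullet> b)\<^sup>2) powr (-2/3)"
      by (intro powr_mono2') (auto intro: add_pos_nonneg)
  qed
  have "(\<Prod>b\<in>(Basis::(real^3) set). y powr (-2/3)) \<le> (\<Prod>b\<in>Basis. (1 + (q \<bullet> b)\<^sup>2) powr (-2/3))"
    by (rule prod_mono) (use each in auto)
  moreover have "(\<Prod>b\<in>(Basis::(real^3) set). y powr (-2/3)) = (y powr (-2/3)) ^ 3"
    by simp
  moreover have "(y powr (-2/3)) ^ 3 = y powr (-2)"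
    using y1 by (subst powr_power) auto
  moreover have "y powr (-2) = 1 / y\<^sup>2"
    using y1 by (simp add: powr_minus powr_numeral divide_inverse)
  ultimately show ?thesis unfolding y_def by simp
qed

lemma G3_fin: "(\<integral>\<^sup>+q. ennreal (1 / (1 + q \<bullet> q)\<^sup>2) \<partial>(lborel :: (real^3) measure)) < \<infinity>"
proof -
  define h where "h t = ennreal ((1 + t\<^sup>2) powr (-2/3))" for t :: real
  have hm: "h \<in> borel_measurable borel" unfolding h_def by measurable
  have "(\<integral>\<^sup>+q. ennreal (1 / (1 + q \<bullet> q)\<^sup>2) \<partial>(lborel :: (real^3) measure))
      \<le> (\<integral>\<^sup>+q. (\<Prod>b\<in>Basis. h (q \<bullet> b)) \<partial>(lborel :: (real^3) measure))"
  proof (rule nn_integral_mono)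
    fix q :: "real^3"
    have "(\<Prod>b\<in>Basis. h (q \<bullet> b)) = ennreal (\<Prod>b\<in>Basis. (1 + (q \<bullet> b)\<^sup>2) powr (-2/3))"
      unfolding h_def by (rule prod_ennreal) simp
    then show "ennreal (1 / (1 + q \<bullet> q)\<^sup>2) \<le> (\<Prod>b\<in>Basis. h (q \<bullet> b))"
      using G3_pointwise[of q] by (simp add: ennreal_leI)
  qed
  also have "\<dots> = (\<Prod>b\<in>(Basis::(real^3) set). (\<integral>\<^sup>+t. h t \<partial>lborel))"
    by (rule nn_integral_lborel_prod) (use hm in auto)
  also have "\<dots> = (\<integral>\<^sup>+t. h t \<partial>lborel) ^ 3" by simp
  also have "\<dots> < \<infinity>" using h_nn_finite unfolding h_def by (simp add: power_less_top_ennreal)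
  finally show ?thesis .
qed

lemma g_fin:
  fixes \<kappa> l :: real
  assumes "\<kappa> > 0" "l > 0"
  shows "(\<integral>\<^sup>+q. ennreal (1 / (\<kappa> * (q \<bullet> q) + l)\<^sup>2) \<partial>(lborel :: (real^3) measure)) < \<infinity>"
proof -
  define m0 where "m0 = min \<kappa> l"
  have m0: "m0 > 0" using assms unfolding m0_def by simp
  have "(\<integral>\<^sup>+q. ennreal (1 / (\<kappa> * (q \<bullet> q) + l)\<^sup>2) \<partial>(lborel :: (real^3) measure))
     \<le> (\<integral>\<^sup>+q. ennreal (1 / m0\<^sup>2) * ennreal (1 / (1 + q \<bullet> q)\<^sup>2) \<partial>(lborel :: (real^3) measure))"
  proof (rule nn_integral_mono)
    fix q :: "real^3"
    have qq: "q \<bullet> q \<ge> 0" by simp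
    have "m0 * (1 + q \<bullet> q) \<le> \<kappa> * (q \<bullet> q) + l"
    proof -
      have "m0 * (q \<bullet> q) \<le> \<kappa> * (q \<bullet> q)" unfolding m0_def using qq by (intro mult_right_mono) auto
      moreover have "m0 \<le> l" unfolding m0_def by simp
      ultimately show ?thesis by (simp add: distrib_left)
    qed
    moreover have "0 < m0 * (1 + q \<bullet> q)" using m0 qq by (intro mult_pos_pos m0 add_pos_nonneg) auto
    ultimately have "1 / (\<kappa> * (q \<bullet> q) + l)\<^sup>2 \<le> 1 / (m0 * (1 + q \<bullet> q))\<^sup>2"
      by (intro divide_left_mono power_mono mult_pos_pos) auto
    also have "\<dots> = (1 / m0\<^sup>2) * (1 / (1 + q \<bullet> q)\<^sup>2)" by (simp add: power_mult_distrib)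
    finally show "ennreal (1 / (\<kappa> * (q \<bullet> q) + l)\<^sup>2) \<le> ennreal (1 / m0\<^sup>2) * ennreal (1 / (1 + q \<bullet> q)\<^sup>2)"
      by (simp add: ennreal_mult[symmetric] ennreal_leI del: ennreal_mult)
  qed
  also have "\<dots> = ennreal (1 / m0\<^sup>2) * (\<integral>\<^sup>+q. ennreal (1 / (1 + q \<bullet> q)\<^sup>2) \<partial>(lborel :: (real^3) measure))"
    by (rule nn_integral_cmult) measurable
  also have "\<dots> < \<infinity>" using G3_fin by (simp add: ennreal_mult_less_top)
  finally show ?thesis .
qed

lemma meas_prod_lborel:
  "f \<in> borel_measurable (lborel \<Otimes>\<^sub>M lborel) \<Longrightarrow> f \<in> borel_measurable (lborel :: ((real^3) \<times> (real^3)) measure)"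
  by (simp only: lborel_prod)

lemma nn_prod_split:
  fixes F G :: "real^3 \<Rightarrow> real"
  assumes Fm[measurable]: "F \<in> borel_measurable lborel" and Gm[measurable]: "G \<in> borel_measurable lborel"
    and Fn: "\<And>a. F a \<ge> 0" and Gn: "\<And>a. G a \<ge> 0"
  shows "(\<integral>\<^sup>+x. ennreal (F (fst x) * G (snd x)) \<partial>(lborel :: ((real^3) \<times> (real^3)) measure))
       = (\<integral>\<^sup>+a. ennreal (F a) \<partial>lborel) * (\<integral>\<^sup>+p. ennreal (G p) \<partial>lborel)"
proof -
  have "(\<integral>\<^sup>+x. ennreal (F (fst x) * G (snd x)) \<partial>(lborel :: ((real^3) \<times> (real^3)) measure))
      = (\<integral>\<^sup>+x. ennreal (F (fst x) * G (snd x)) \<partial>(lborel \<Otimes>\<^sub>M lborel))"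
    by (simp only: lborel_prod)
  also have "\<dots> = (\<integral>\<^sup>+a. \<integral>\<^sup>+p. ennreal (F a * G p) \<partial>lborel \<partial>lborel)"
    by (rule sigma_finite_measure.nn_integral_fst[OF sigma_finite_lborel, symmetric, where f = "\<lambda>x. ennreal (F (fst x) * G (snd x))", simplified]) measurable
  also have "\<dots> = (\<integral>\<^sup>+a. ennreal (F a) * (\<integral>\<^sup>+p. ennreal (G p) \<partial>lborel) \<partial>lborel)"
  proof (rule nn_integral_cong)
    fix a
    have "(\<integral>\<^sup>+p. ennreal (F a * G p) \<partial>lborel) = (\<integral>\<^sup>+p. ennreal (F a) * ennreal (G p) \<partial>lborel)"
      using Fn Gn by (simp add: ennreal_mult)
    also have "\<dots> = ennreal (F a) * (\<integral>\<^sup>+p. ennreal (G p) \<partial>lborel)"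
      by (rule nn_integral_cmult) measurable
    finally show "(\<integral>\<^sup>+p. ennreal (F a * G p) \<partial>lborel) = ennreal (F a) * (\<integral>\<^sup>+p. ennreal (G p) \<partial>lborel)" .
  qed
  also have "\<dots> = (\<integral>\<^sup>+a. ennreal (F a) \<partial>lborel) * (\<integral>\<^sup>+p. ennreal (G p) \<partial>lborel)"
    by (rule nn_integral_multc) measurable
  finally show ?thesis .
qed

lemma e_L2:
  fixes \<xi> :: "real^3 \<Rightarrow> complex" and \<mu> l :: real
  assumes mu: "0 \<le> \<mu>" "\<mu> < 2" and l: "l > 0"
    and xm[measurable]: "\<xi> \<in> borel_measurable lborel"
    and xi2: "integrable lborel (\<lambda>p. (cmod (\<xi> p))\<^sup>2)"
  shows "integrable (lborel :: ((real^3) \<times> (real^3)) measure)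
     (\<lambda>x. (cmod ((\<xi> (fst x) - \<xi> (snd x)) / complex_of_real (Xf \<mu> (fst x) (snd x) + l)))\<^sup>2)"
proof -
  define \<kappa> where "\<kappa> = 1 - \<mu>/2"
  have k: "\<kappa> > 0" using mu unfolding \<kappa>_def by simp
  define g where "g q = 1 / (\<kappa> * (q \<bullet> q) + l)\<^sup>2" for q :: "real^3"
  define F where "F a = 2 * (cmod (\<xi> a))\<^sup>2" for a
  have gm[measurable]: "g \<in> borel_measurable lborel" unfolding g_def by measurable
  have Fm[measurable]: "F \<in> borel_measurable lborel" unfolding F_def by measurable
  have gn: "g q \<ge> 0" for q unfolding g_def by simp
  have Fn: "F a \<ge> 0" for a unfolding F_def by simp
  have gfin: "(\<integral>\<^sup>+q. ennreal (g q) \<partial>lborel) < \<infinity>" unfolding g_def by (rule g_fin[OF k l])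
  have Ffin: "(\<integral>\<^sup>+a. ennreal (F a) \<partial>lborel) < \<infinity>"
  proof -
    have "integrable lborel F" unfolding F_def using xi2 by simp
    then have "(\<integral>\<^sup>+a. ennreal (norm (F a)) \<partial>lborel) < \<infinity>" by (simp add: integrable_iff_bounded)
    then show ?thesis using Fn by simp
  qed
  define e where "e x = (cmod ((\<xi> (fst x) - \<xi> (snd x)) / complex_of_real (Xf \<mu> (fst x) (snd x) + l)))\<^sup>2" for x :: "(real^3) \<times> (real^3)"
  have em': "e \<in> borel_measurable (lborel \<Otimes>\<^sub>M lborel)" unfolding e_def Xf_def by measurable
  then have em[measurable]: "e \<in> borel_measurable lborel" by (simp only: lborel_prod)
  have bound: "e x \<le> F (fst x) * g (snd x) + F (snd x) * g (fst x)" for x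
  proof -
    obtain a p where x: "x = (a, p)" by (cases x)
    define D where "D = Xf \<mu> a p + l"
    have Dlow: "\<kappa> * (a \<bullet> a + p \<bullet> p) + l \<le> D" unfolding D_def \<kappa>_def using Xf_lower[of \<mu> a p] mu by simp
    have aa: "a \<bullet> a \<ge> 0" and pp: "p \<bullet> p \<ge> 0" by simp_all
    have D1: "\<kappa> * (p \<bullet> p) + l \<le> D" using Dlow k aa by (smt (verit) distrib_left mult_nonneg_nonneg)
    have D2: "\<kappa> * (a \<bullet> a) + l \<le> D" using Dlow k pp by (smt (verit) distrib_left mult_nonneg_nonneg)
    have P1: "0 < \<kappa> * (p \<bullet> p) + l" using k l pp by (smt (verit) mult_nonneg_nonneg)
    have P2: "0 < \<kappa> * (a \<bullet> a) + l" using k l aa by (smt (verit) mult_nonneg_nonneg)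
    have Dpos: "D > 0" using D1 P1 by simp
    have g1: "1 / D\<^sup>2 \<le> g p" unfolding g_def using D1 P1 by (intro divide_left_mono power_mono mult_pos_pos) auto
    have g2: "1 / D\<^sup>2 \<le> g a" unfolding g_def using D2 P2 by (intro divide_left_mono power_mono mult_pos_pos) auto
    have num: "(cmod (\<xi> a - \<xi> p))\<^sup>2 \<le> 2 * (cmod (\<xi> a))\<^sup>2 + 2 * (cmod (\<xi> p))\<^sup>2"
    proof -
      have "cmod (\<xi> a - \<xi> p) \<le> cmod (\<xi> a) + cmod (\<xi> p)" by (rule norm_triangle_ineq4)
      then have "(cmod (\<xi> a - \<xi> p))\<^sup>2 \<le> (cmod (\<xi> a) + cmod (\<xi> p))\<^sup>2" by (intro power_mono) auto
      also have "\<dots> \<le> 2 * (cmod (\<xi> a))\<^sup>2 + 2 * (cmod (\<xi> p))\<^sup>2"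
        by (smt (verit) sum_squares_bound power2_sum)
      finally show ?thesis .
    qed
    have nD: "cmod (complex_of_real D) = D" using Dpos by simp
    have "e x = (cmod (\<xi> a - \<xi> p))\<^sup>2 / D\<^sup>2"
      unfolding e_def x by (simp only: fst_conv snd_conv D_def[symmetric] norm_divide nD power_divide)
    also have "\<dots> \<le> (2 * (cmod (\<xi> a))\<^sup>2 + 2 * (cmod (\<xi> p))\<^sup>2) / D\<^sup>2"
      using num by (intro divide_right_mono) auto
    also have "\<dots> = F a * (1 / D\<^sup>2) + F p * (1 / D\<^sup>2)" unfolding F_def by (simp add: add_divide_distrib)
    also have "\<dots> \<le> F a * g p + F p * g a"
      using g1 g2 Fn by (intro add_mono mult_left_mono) auto
    finally show ?thesis unfolding x by simp
  qed
  have "(\<integral>\<^sup>+x. ennreal (norm (e x)) \<partial>(lborel :: ((real^3) \<times> (real^3)) measure))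
     \<le> (\<integral>\<^sup>+x. ennreal (F (fst x) * g (snd x)) + ennreal (g (fst x) * F (snd x)) \<partial>lborel)"
  proof (rule nn_integral_mono)
    fix x :: "(real^3) \<times> (real^3)"
    have "norm (e x) = e x" unfolding e_def by simp
    then show "ennreal (norm (e x)) \<le> ennreal (F (fst x) * g (snd x)) + ennreal (g (fst x) * F (snd x))"
      using bound[of x] Fn gn by (simp add: ennreal_plus[symmetric] mult.commute del: ennreal_plus)
  qed
  also have "\<dots> = (\<integral>\<^sup>+x. ennreal (F (fst x) * g (snd x)) \<partial>lborel) + (\<integral>\<^sup>+x. ennreal (g (fst x) * F (snd x)) \<partial>lborel)"
    by (intro nn_integral_add meas_prod_lborel) measurable
  also have "\<dots> = (\<integral>\<^sup>+a. ennreal (F a) \<partial>lborel) * (\<integral>\<^sup>+p. ennreal (g p) \<partial>lborel)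
       + (\<integral>\<^sup>+a. ennreal (g a) \<partial>lborel) * (\<integral>\<^sup>+p. ennreal (F p) \<partial>lborel)"
    using nn_prod_split[OF Fm gm Fn gn] nn_prod_split[OF gm Fm gn Fn] by simp
  also have "\<dots> < \<infinity>" using Ffin gfin by (simp add: ennreal_mult_less_top ennreal_add_less_top)
  finally have "(\<integral>\<^sup>+x. ennreal (norm (e x)) \<partial>(lborel :: ((real^3) \<times> (real^3)) measure)) < \<infinity>" .
  then have "integrable lborel e" using em by (simp add: integrable_iff_bounded)
  then show ?thesis unfolding e_def .
qed

lemma core:
  fixes \<mu> :: real and L :: "real set" and W :: "real^3 \<Rightarrow> real \<Rightarrow> complex"
  assumes mu: "0 < \<mu>" "\<mu> < 2" and fin: "finite L" and Lpos: "\<And>l. l \<in> L \<Longrightarrow> l > 0"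
    and H: "AE a in lborel. AE p in lborel. (\<Sum>l\<in>L. (W a l - W p l) / complex_of_real (Xf \<mu> a p + l)) = 0"
  shows "\<exists>cc. AE p in lborel. \<forall>l\<in>L. W p l = cc l"
proof (cases "L = {}")
  case True
  then show ?thesis by simp
next
  case Lne: False
  from H obtain N where N1: "{a \<in> space lborel. \<not> (AE p in lborel. (\<Sum>l\<in>L. (W a l - W p l) / complex_of_real (Xf \<mu> a p + l)) = 0)} \<subseteq> N"
    and N2: "emeasure lborel N = 0" and N3: "N \<in> sets lborel"
    by (rule AE_E)
  have Nnull: "N \<in> null_sets lborel" using N2 N3 by auto
  have good: "AE p in lborel. (\<Sum>l\<in>L. (W a l - W p l) / complex_of_real (Xf \<mu> a p + l)) = 0" if "a \<notin> N" for a
    using N1 that by auto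
  have "N \<noteq> UNIV"
  proof
    assume "N = UNIV"
    then show False using N2 by simp
  qed
  then obtain q0 where q0: "q0 \<notin> N" by auto
  have "AE p in lborel. p \<notin> N" using AE_not_in[OF Nnull] .
  then have "AE p in lborel. \<forall>l\<in>L. W p l = W q0 l"
  proof eventually_elim
    case (elim p)
    show ?case
    proof (cases "p = q0")
      case False
      then show ?thesis using core_pair[OF mu fin Lne Lpos Nnull good elim q0] by blast
    qed simp
  qed
  then show ?thesis by blast
qed

lemma sq_integrable_add:
  fixes f g :: "'a \<Rightarrow> complex"
  assumes fm: "f \<in> borel_measurable M" and gm: "g \<in> borel_measurable M"
    and fi: "integrable M (\<lambda>x. (cmod (f x))\<^sup>2)" and gi: "integrable M (\<lambda>x. (cmod (g x))\<^sup>2)"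
  shows "integrable M (\<lambda>x. (cmod (f x + g x))\<^sup>2)"
proof (rule Bochner_Integration.integrable_bound)
  show "integrable M (\<lambda>x. 2 * (cmod (f x))\<^sup>2 + 2 * (cmod (g x))\<^sup>2)" using fi gi by simp
  show "(\<lambda>x. (cmod (f x + g x))\<^sup>2) \<in> borel_measurable M" using fm gm by measurable
  show "AE x in M. norm ((cmod (f x + g x))\<^sup>2) \<le> norm (2 * (cmod (f x))\<^sup>2 + 2 * (cmod (g x))\<^sup>2)"
  proof (rule AE_I2)
    fix x
    have "cmod (f x + g x) \<le> cmod (f x) + cmod (g x)" by (rule norm_triangle_ineq)
    then have "(cmod (f x + g x))\<^sup>2 \<le> (cmod (f x) + cmod (g x))\<^sup>2" by (intro power_mono) auto
    also have "\<dots> \<le> 2 * (cmod (f x))\<^sup>2 + 2 * (cmod (g x))\<^sup>2"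
      by (smt (verit) sum_squares_bound power2_sum)
    finally show "norm ((cmod (f x + g x))\<^sup>2) \<le> norm (2 * (cmod (f x))\<^sup>2 + 2 * (cmod (g x))\<^sup>2)"
      by simp
  qed
qed

lemma sq_integrable_sum:
  fixes f :: "'i \<Rightarrow> 'a \<Rightarrow> complex" and c :: "'i \<Rightarrow> complex"
  assumes "finite S"
    and fm: "\<And>i. i \<in> S \<Longrightarrow> f i \<in> borel_measurable M"
    and fi: "\<And>i. i \<in> S \<Longrightarrow> integrable M (\<lambda>x. (cmod (f i x))\<^sup>2)"
  shows "integrable M (\<lambda>x. (cmod (\<Sum>i\<in>S. c i * f i x))\<^sup>2)"
  using assms
proof (induction S rule: finite_induct)
  case empty
  then show ?case by simp
next
  case (insert j S)
  have m1: "(\<lambda>x. c j * f j x) \<in> borel_measurable M" using insert.prems(1) by measurable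
  have m2: "(\<lambda>x. \<Sum>i\<in>S. c i * f i x) \<in> borel_measurable M"
    using insert.prems(1) by (intro borel_measurable_sum borel_measurable_times) auto
  have i1: "integrable M (\<lambda>x. (cmod (c j * f j x))\<^sup>2)"
    using insert.prems(2)[of j] by (simp add: norm_mult power_mult_distrib)
  have i2: "integrable M (\<lambda>x. (cmod (\<Sum>i\<in>S. c i * f i x))\<^sup>2)"
    using insert by auto
  show ?case using sq_integrable_add[OF m1 m2 i1 i2] insert(1,2) by simp
qed

lemma const_not_integrable:
  assumes "integrable (lborel :: (real^3) measure) (\<lambda>x. (r::real))"
  shows "r = 0"
proof (rule ccontr)
  assume r: "r \<noteq> 0"
  have "(\<integral>\<^sup>+x. ennreal (norm r) \<partial>(lborel :: (real^3) measure)) = ennreal (norm r) * emeasure lborel (UNIV :: (real^3) set)"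
    by (simp add: nn_integral_const)
  also have "\<dots> = \<infinity>" using r by (simp add: ennreal_mult_top)
  finally show False using assms by (simp add: integrable_iff_bounded)
qed

lemma cnj_meas[measurable]: "f \<in> borel_measurable M \<Longrightarrow> (\<lambda>x. cnj (f x)) \<in> borel_measurable M"
  by (rule borel_measurable_continuous_on[where f = cnj]) (auto intro: continuous_intros)

lemma prod_le_sq:
  fixes x y :: real
  assumes "0 \<le> x" "0 \<le> y"
  shows "x * y \<le> x\<^sup>2 + y\<^sup>2"
proof -
  have "0 \<le> (x - y)\<^sup>2" by simp
  then have "2 * (x * y) \<le> x\<^sup>2 + y\<^sup>2" by (simp add: power2_diff)
  moreover have "0 \<le> x * y" using assms by simp
  ultimately show ?thesis by linarith
qed

lemma u_hat_Xf: "u_hat lam \<xi> m x = (\<xi> (fst x) - \<xi> (snd x)) / complex_of_real (Xf (mu m) (fst x) (snd x) + lam)"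
  by (cases x) (simp add: u_hat_def Xf_def)

lemma mu_bounds: "m > 0 \<Longrightarrow> 0 < mu m \<and> mu m < 2"
  unfolding mu_def by (simp add: field_simps)

lemma u_hat_meas:
  assumes [measurable]: "\<xi> \<in> borel_measurable lborel"
  shows "u_hat lam \<xi> m \<in> borel_measurable (lborel :: ((real^3) \<times> (real^3)) measure)"
proof -
  have "(\<lambda>x. (\<xi> (fst x) - \<xi> (snd x)) / complex_of_real (Xf (mu m) (fst x) (snd x) + lam)) \<in> borel_measurable (lborel \<Otimes>\<^sub>M lborel)"
    unfolding Xf_def by measurable
  then show ?thesis unfolding u_hat_Xf[abs_def] by (rule meas_prod_lborel)
qed

theorem lemma11p1:
  fixes N :: nat and lam :: "nat \<Rightarrow> real" and xih :: "nat \<Rightarrow> real^3 \<Rightarrow> complex"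
    and m m' :: real
  assumes lam_pos: "\<And>i. i < N \<Longrightarrow> lam i > 0"
    and xi_H: "\<And>i. i < N \<Longrightarrow> H_half_hat (xih i)"
    and m_pos: "m > 0"
    and nonzero: "\<And>i. i < N \<Longrightarrow> L2_nonzero (u_hat (lam i) (xih i) m)"
    and orth: "\<And>i j. i < N \<Longrightarrow> j < N \<Longrightarrow> i \<noteq> j \<Longrightarrow>
                  L2_inner (u_hat (lam i) (xih i) m) (u_hat (lam j) (xih j) m) = 0"
    and m'_pos: "m' > 0"
    and close: "\<bar>m - m'\<bar> / (m' * (m + 1)) < 1"
  shows "L2_lin_indep N (\<lambda>i. u_hat (lam i) (xih i) m')"
proof -
  define \<mu>' where "\<mu>' = mu m'"
  have mu': "0 < \<mu>'" "\<mu>' < 2" using mu_bounds[OF m'_pos] unfolding \<mu>'_def by auto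
  have mu0: "0 < mu m" "mu m < 2" using mu_bounds[OF m_pos] by auto
  have xm: "xih i \<in> borel_measurable lborel" if "i < N" for i
    using xi_H[OF that] unfolding H_half_hat_def by simp
  have xi2: "integrable lborel (\<lambda>p. (cmod (xih i p))\<^sup>2)" if i: "i < N" for i
  proof (rule Bochner_Integration.integrable_bound)
    show "integrable lborel (\<lambda>p. (1 + (norm p)\<^sup>2) powr (1/2) * (cmod (xih i p))\<^sup>2)"
      using xi_H[OF i] unfolding H_half_hat_def by simp
    show "(\<lambda>p. (cmod (xih i p))\<^sup>2) \<in> borel_measurable lborel" using xm[OF i] by measurable
    show "AE p in lborel. norm ((cmod (xih i p))\<^sup>2) \<le> norm ((1 + (norm p)\<^sup>2) powr (1/2) * (cmod (xih i p))\<^sup>2)"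
    proof (rule AE_I2)
      fix p :: "real^3"
      have one: "1 \<le> (1 + (norm p)\<^sup>2) powr (1/2)" by (rule ge_one_powr_ge_zero) auto
      have "(cmod (xih i p))\<^sup>2 \<le> (1 + (norm p)\<^sup>2) powr (1/2) * (cmod (xih i p))\<^sup>2"
        using mult_right_mono[OF one zero_le_power2[of "cmod (xih i p)"]] by simp
      then show "norm ((cmod (xih i p))\<^sup>2) \<le> norm ((1 + (norm p)\<^sup>2) powr (1/2) * (cmod (xih i p))\<^sup>2)"
        by simp
    qed
  qed
  show ?thesis
    unfolding L2_lin_indep_def
  proof (rule allI, rule impI)
    fix c :: "nat \<Rightarrow> complex"
    assume H0: "AE x in lborel. (\<Sum>i<N. c i * u_hat (lam i) (xih i) m' x) = 0"
    define L where "L = lam ` {..<N}"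
    define S where "S l = {i. i \<in> {..<N} \<and> lam i = l}" for l
    define W where "W p l = (\<Sum>i\<in>S l. c i * xih i p)" for p l
    have finL: "finite L" unfolding L_def by simp
    have Lpos: "l > 0" if "l \<in> L" for l using that lam_pos unfolding L_def by auto
    have finS: "finite (S l)" for l unfolding S_def by simp
    have Wm[measurable]: "(\<lambda>p. W p l) \<in> borel_measurable lborel" for l
      unfolding W_def using xm by (intro borel_measurable_sum borel_measurable_times) (auto simp: S_def)
    have ident: "(\<Sum>i<N. c i * u_hat (lam i) (xih i) m' (a, p)) = (\<Sum>l\<in>L. (W a l - W p l) / complex_of_real (Xf \<mu>' a p + l))" for a p
    proof -
      have "(\<Sum>l\<in>L. (W a l - W p l) / complex_of_real (Xf \<mu>' a p + l))
          = (\<Sum>l\<in>L. \<Sum>i\<in>S l. c i * u_hat (lam i) (xih i) m' (a, p))"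
      proof (rule sum.cong[OF refl])
        fix l assume "l \<in> L"
        have "(W a l - W p l) / complex_of_real (Xf \<mu>' a p + l) = (\<Sum>i\<in>S l. (c i * xih i a - c i * xih i p) / complex_of_real (Xf \<mu>' a p + l))"
          unfolding W_def by (simp add: sum_divide_distrib[symmetric] sum_subtractf)
        also have "\<dots> = (\<Sum>i\<in>S l. c i * u_hat (lam i) (xih i) m' (a, p))"
          by (rule sum.cong[OF refl]) (simp add: S_def u_hat_Xf \<mu>'_def right_diff_distrib)
        finally show "(W a l - W p l) / complex_of_real (Xf \<mu>' a p + l) = (\<Sum>i\<in>S l. c i * u_hat (lam i) (xih i) m' (a, p))" .
      qed
      also have "\<dots> = (\<Sum>i<N. c i * u_hat (lam i) (xih i) m' (a, p))"
        unfolding S_def L_def by (rule sum.group) auto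
      finally show ?thesis by simp
    qed
    have H1: "AE x in lborel \<Otimes>\<^sub>M lborel. (\<Sum>i<N. c i * u_hat (lam i) (xih i) m' x) = 0"
      using H0 by (simp only: lborel_prod)
    have H: "AE a in lborel. AE p in lborel. (\<Sum>l\<in>L. (W a l - W p l) / complex_of_real (Xf \<mu>' a p + l)) = 0"
      using lborel_pair.AE_pair[OF H1]
    proof eventually_elim
      case (elim a)
      show ?case using elim
      proof eventually_elim
        case (elim p)
        then show ?case using ident[of a p] by simp
      qed
    qed
    obtain cc where cc: "AE p in lborel. \<forall>l\<in>L. W p l = cc l"
      using core[OF mu' finL Lpos H] by blast
    have cc0: "cc l = 0" if l: "l \<in> L" for l
    proof -
      have Wi: "integrable lborel (\<lambda>p. (cmod (W p l))\<^sup>2)"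
        unfolding W_def using xm xi2 by (intro sq_integrable_sum finS) (auto simp: S_def)
      have ae: "AE p in lborel. (cmod (W p l))\<^sup>2 = (cmod (cc l))\<^sup>2" using cc by eventually_elim (use l in auto)
      have m1: "(\<lambda>p. (cmod (W p l))\<^sup>2) \<in> borel_measurable lborel" by measurable
      have m2: "(\<lambda>p::real^3. (cmod (cc l))\<^sup>2) \<in> borel_measurable lborel" by simp
      have "integrable lborel (\<lambda>p::real^3. (cmod (cc l))\<^sup>2)"
        using Wi integrable_cong_AE[OF m1 m2 ae] by simp
      then have "(cmod (cc l))\<^sup>2 = 0" by (rule const_not_integrable)
      then show ?thesis by simp
    qed
    have W0: "AE p in lborel. W p l = 0" if "l \<in> L" for l
      using cc by eventually_elim (use cc0 that in auto)
    show "\<forall>j<N. c j = 0"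
    proof (intro allI impI)
      fix j assume j: "j < N"
      define l where "l = lam j"
      have lL: "l \<in> L" unfolding l_def L_def using j by simp
      have jS: "j \<in> S l" unfolding S_def l_def using j by simp
      define e where "e i = u_hat (lam i) (xih i) m" for i
      have em: "e i \<in> borel_measurable lborel" if "i < N" for i
        unfolding e_def by (rule u_hat_meas[OF xm[OF that]])
      have e2: "integrable lborel (\<lambda>x. (cmod (e i x))\<^sup>2)" if i: "i < N" for i
        unfolding e_def u_hat_Xf
        by (rule e_L2[OF less_imp_le[OF mu0(1)] mu0(2) lam_pos[OF i] xm[OF i] xi2[OF i]])
      have eint: "integrable lborel (\<lambda>x. e i x * cnj (e k x))" if "i < N" "k < N" for i k
      proof (rule Bochner_Integration.integrable_bound)
        show "integrable lborel (\<lambda>x. (cmod (e i x))\<^sup>2 + (cmod (e k x))\<^sup>2)" using e2 that by simp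
        show "(\<lambda>x. e i x * cnj (e k x)) \<in> borel_measurable lborel" using em that by (intro borel_measurable_times cnj_meas) auto
        show "AE x in lborel. norm (e i x * cnj (e k x)) \<le> norm ((cmod (e i x))\<^sup>2 + (cmod (e k x))\<^sup>2)"
        proof (rule AE_I2)
          fix x
          have "cmod (e i x) * cmod (e k x) \<le> (cmod (e i x))\<^sup>2 + (cmod (e k x))\<^sup>2"
            by (rule prod_le_sq) auto
          then show "norm (e i x * cnj (e k x)) \<le> norm ((cmod (e i x))\<^sup>2 + (cmod (e k x))\<^sup>2)"
            by (simp add: norm_mult)
        qed
      qed
      have AEz: "AE x in lborel. (\<Sum>i\<in>S l. c i * e i x) = 0"
      proof -
        have "AE x in lborel \<Otimes>\<^sub>M lborel. W (fst x) l = 0 \<and> W (snd x) l = 0"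
        proof (rule lborel_pair.AE_pair_measure)
          show "{x \<in> space (lborel \<Otimes>\<^sub>M lborel). W (fst x) l = 0 \<and> W (snd x) l = 0} \<in> sets (lborel \<Otimes>\<^sub>M lborel)"
            by measurable
          show "AE a in lborel. AE p in lborel. W (fst (a, p)) l = 0 \<and> W (snd (a, p)) l = 0"
            using W0[OF lL]
          proof eventually_elim
            case (elim a)
            show ?case using W0[OF lL] by eventually_elim (use elim in simp)
          qed
        qed
        then have "AE x in lborel. W (fst x) l = 0 \<and> W (snd x) l = 0" by (simp only: lborel_prod)
        then show ?thesis
        proof eventually_elim
          case (elim x)
          have "(\<Sum>i\<in>S l. c i * e i x) = (\<Sum>i\<in>S l. (c i * xih i (fst x) - c i * xih i (snd x)) / complex_of_real (Xf (mu m) (fst x) (snd x) + l))"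
            by (rule sum.cong[OF refl]) (simp add: e_def u_hat_Xf S_def right_diff_distrib)
          also have "\<dots> = (W (fst x) l - W (snd x) l) / complex_of_real (Xf (mu m) (fst x) (snd x) + l)"
            unfolding W_def by (simp add: sum_divide_distrib[symmetric] sum_subtractf)
          also have "\<dots> = 0" using elim by simp
          finally show ?case .
        qed
      qed
      have SN: "i < N" if "i \<in> S l" for i using that unfolding S_def by simp
      have "L2_inner (\<lambda>x. \<Sum>i\<in>S l. c i * e i x) (e j) = 0"
      proof -
        have "L2_inner (\<lambda>x. \<Sum>i\<in>S l. c i * e i x) (e j) = integral\<^sup>L lborel (\<lambda>x::(real^3) \<times> (real^3). 0::complex)"
          unfolding L2_inner_def
        proof (rule integral_cong_AE)
          show "(\<lambda>x. (\<Sum>i\<in>S l. c i * e i x) * cnj (e j x)) \<in> borel_measurable lborel"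
            using em SN j by (intro borel_measurable_times borel_measurable_sum cnj_meas) auto
          show "(\<lambda>x. 0::complex) \<in> borel_measurable lborel" by simp
          show "AE x in lborel. (\<Sum>i\<in>S l. c i * e i x) * cnj (e j x) = 0" using AEz by eventually_elim simp
        qed
        then show ?thesis by simp
      qed
      moreover have "L2_inner (\<lambda>x. \<Sum>i\<in>S l. c i * e i x) (e j) = (\<Sum>i\<in>S l. c i * L2_inner (e i) (e j))"
      proof -
        have "L2_inner (\<lambda>x. \<Sum>i\<in>S l. c i * e i x) (e j) = (\<integral>x. (\<Sum>i\<in>S l. c i * (e i x * cnj (e j x))) \<partial>lborel)"
          unfolding L2_inner_def by (simp add: sum_distrib_right mult.assoc)
        also have "\<dots> = (\<Sum>i\<in>S l. (\<integral>x. c i * (e i x * cnj (e j x)) \<partial>lborel))"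
        proof (rule Bochner_Integration.integral_sum)
          fix i assume "i \<in> S l"
          then show "integrable lborel (\<lambda>x. c i * (e i x * cnj (e j x)))"
            using eint[of i j] SN j by simp
        qed
        also have "\<dots> = (\<Sum>i\<in>S l. c i * L2_inner (e i) (e j))"
          unfolding L2_inner_def by simp
        finally show ?thesis .
      qed
      moreover have "(\<Sum>i\<in>S l. c i * L2_inner (e i) (e j)) = c j * L2_inner (e j) (e j)"
      proof -
        have "(\<Sum>i\<in>S l. c i * L2_inner (e i) (e j)) = (\<Sum>i\<in>{j}. c i * L2_inner (e i) (e j))"
        proof (rule sum.mono_neutral_right)
          show "\<forall>i\<in>S l - {j}. c i * L2_inner (e i) (e j) = 0"
            using orth SN j unfolding e_def by auto
        qed (use finS jS in auto)
        then show ?thesis by simp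
      qed
      moreover have "L2_inner (e j) (e j) \<noteq> 0"
      proof
        assume z: "L2_inner (e j) (e j) = 0"
        have "L2_inner (e j) (e j) = complex_of_real (\<integral>x. (cmod (e j x))\<^sup>2 \<partial>lborel)"
        proof -
          have "(\<lambda>x. e j x * cnj (e j x)) = (\<lambda>x. complex_of_real ((cmod (e j x))\<^sup>2))"
            by (rule ext, rule complex_norm_square[symmetric])
          then show ?thesis unfolding L2_inner_def by (simp only: integral_complex_of_real)
        qed
        then have "(\<integral>x. (cmod (e j x))\<^sup>2 \<partial>lborel) = 0" using z by simp
        then have "AE x in lborel. (cmod (e j x))\<^sup>2 = 0"
          using integral_nonneg_eq_0_iff_AE[OF e2[OF j]] by simp
        then have "AE x in lborel. e j x = 0" by simp
        then show False using nonzero[OF j] unfolding L2_nonzero_def e_def by simp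
      qed
      ultimately show "c j = 0" by simp
    qed
  qed
qed

end
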